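(* Let $n \geq 1$, $m \geq 0$ and $1 \leq j \leq n$ be integers. Then $L(m,j) = \binom{m+j-1}{m}$.
   Context: Six-vertex model: on an $r \times c$ grid ($r$ rows, $c$ columns) there are $r$ horizontal lines and $c$ vertical lines meeting in $rc$ vertices. Each horizontal line consists of $c+1$ edges (the outermost ones are a left and a right boundary edge) and each vertical line of $r+1$ edges (the outermost ones are a top and a bottom boundary edge). A state assigns an orientation to every edge, agreeing with prescribed orientations on the boundary edges, such that at every vertex exactly two of the four adjacent edges point into the vertex and two point out. $L(m,j)$ is the number of states on the grid with $n$ rows and $m+1$ columns, rows numbered $1, \ldots, n$ from top to bottom, with boundary conditions: the top boundary arrow of the leftmost column points up and all other top boundary arrows point down; all bottom boundary arrows point down; all left boundary arrows point right; the right boundary arrow in row $j$ points left and all other right boundary arrows point right. *)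

theory Defs
  imports Main
begin

text \<open>Six-vertex model on an r x c grid. Rows 1..r (top to bottom), columns 1..c
(leftb to rightb). Horizontal edges: h i k for row i \<in> {1..r} and k \<in> {0..c};
edge k of row i lies between columns k and k+1 (k = 0 is the leftb boundary edge,
k = c the rightb boundary edge). h i k = True means the edge points rightb.
Vertical edges: v l k for column l \<in> {1..c} and k \<in> {0..r}; edge k of column l
lies between rows k and k+1 (k = 0 top boundary edge, k = r bottom boundary edge).
v l k = True means the edge points down. Outside the index range the functions are
fixed to False so that states are in bijection with orientations.\<close>

definition in_count :: "(nat \<Rightarrow> nat \<Rightarrow> bool) \<Rightarrow> (nat \<Rightarrow> nat \<Rightarrow> bool) \<Rightarrow> nat \<Rightarrow> nat \<Rightarrow> nat" where
  "in_count h v i l =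
     (if h i (l - 1) then 1 else 0) + (if \<not> h i l then 1 else 0) +
     (if v l (i - 1) then 1 else 0) + (if \<not> v l i then 1 else 0)"

text \<open>Boundary data: topb l / botb l = True iff the top / bottom boundary arrow of column l
points down; leftb i / rightb i = True iff the leftb / rightb boundary arrow of row i points rightb.\<close>

definition sv_states ::
  "nat \<Rightarrow> nat \<Rightarrow> (nat \<Rightarrow> bool) \<Rightarrow> (nat \<Rightarrow> bool) \<Rightarrow> (nat \<Rightarrow> bool) \<Rightarrow> (nat \<Rightarrow> bool)
   \<Rightarrow> ((nat \<Rightarrow> nat \<Rightarrow> bool) \<times> (nat \<Rightarrow> nat \<Rightarrow> bool)) set" where
  "sv_states r c topb botb leftb rightb =
    {(h, v). (\<forall>i k. (i < 1 \<or> i > r \<or> k > c) \<longrightarrow> \<not> h i k)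
           \<and> (\<forall>l k. (l < 1 \<or> l > c \<or> k > r) \<longrightarrow> \<not> v l k)
           \<and> (\<forall>l\<in>{1..c}. v l 0 = topb l \<and> v l r = botb l)
           \<and> (\<forall>i\<in>{1..r}. h i 0 = leftb i \<and> h i c = rightb i)
           \<and> (\<forall>i\<in>{1..r}. \<forall>l\<in>{1..c}. in_count h v i l = 2)}"

definition L :: "nat \<Rightarrow> nat \<Rightarrow> nat \<Rightarrow> nat" where
  "L n m j = card (sv_states n (m + 1) (\<lambda>l. l \<noteq> 1) (\<lambda>l. True) (\<lambda>i. True) (\<lambda>i. i \<noteq> j))"

end

theory Submission imports Defs "HOL-Library.Multiset" begin

lemma row:
  fixes a bt bb :: "nat \<Rightarrow> bool" and c p :: nat
  assumes a0: "\<not> a 0"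
  and cons: "\<And>l. 1 \<le> l \<Longrightarrow> l \<le> c \<Longrightarrow> of_bool (a l) + of_bool (bb l) = of_bool (a (l-1)) + (of_bool (bt l) :: nat)"
  and bt: "\<And>l. 1 \<le> l \<Longrightarrow> l \<le> c \<Longrightarrow> bt l \<longleftrightarrow> l = p"
  and p: "1 \<le> p" "p \<le> c+1"
  shows "\<exists>q. p \<le> q \<and> q \<le> c+1 \<and> (\<forall>l. 1 \<le> l \<longrightarrow> l \<le> c \<longrightarrow> (bb l \<longleftrightarrow> l = q)) \<and> (\<forall>l\<le>c. a l \<longleftrightarrow> p \<le> l \<and> l < q)"
proof -
  define q where "q = (LEAST l. (1\<le>l \<and> l\<le>c \<and> bb l) \<or> l = c+1)"
  have q1: "(1\<le>q \<and> q\<le>c \<and> bb q) \<or> q = c+1" unfolding q_def by (rule LeastI[of _ "c+1"]) simp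
  have q2: "\<And>l. l < q \<Longrightarrow> \<not> (1\<le>l \<and> l\<le>c \<and> bb l)" unfolding q_def using not_less_Least by blast
  have qle: "q \<le> c+1" unfolding q_def by (rule Least_le) simp
  have claim: "l \<le> c \<Longrightarrow> (a l \<longleftrightarrow> p \<le> l \<and> l < q) \<and> (q \<le> l \<longrightarrow> p \<le> q) \<and> (1 \<le> l \<longrightarrow> (bb l \<longleftrightarrow> l = q))" for l
  proof (induction l)
    case 0
    then show ?case using a0 p q1 by auto
  next
    case (Suc l)
    have IH: "(a l \<longleftrightarrow> p \<le> l \<and> l < q) \<and> (q \<le> l \<longrightarrow> p \<le> q)" using Suc by auto
    have cs: "of_bool (a (Suc l)) + of_bool (bb (Suc l)) = of_bool (a l) + (of_bool (Suc l = p) :: nat)"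
      using cons[of "Suc l"] bt[of "Suc l"] Suc.prems by simp
    consider "Suc l < q" | "Suc l = q" | "q < Suc l" by linarith
    then show ?case
    proof cases
      case 1
      then have "\<not> bb (Suc l)" using q2 Suc.prems by auto
      then show ?thesis using cs IH 1 by (auto simp: of_bool_def split: if_splits)
    next
      case 2
      then have "bb (Suc l)" using q1 Suc.prems by auto
      then show ?thesis using cs IH 2 by (auto simp: of_bool_def split: if_splits)
    next
      case 3
      then show ?thesis using cs IH by (auto simp: of_bool_def split: if_splits)
    qed
  qed
  have pq: "p \<le> q"
  proof (cases "q \<le> c")
    case True then show ?thesis using claim[of q] by auto
  next
    case False then show ?thesis using qle p by auto
  qed
  show ?thesis using pq qle claim by (intro exI[of _ q]) auto
qed


definition stT :: "nat \<Rightarrow> nat \<Rightarrow> (nat \<Rightarrow> nat) \<Rightarrow> (nat\<Rightarrow>nat\<Rightarrow>bool) \<times> (nat\<Rightarrow>nat\<Rightarrow>bool)" where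
"stT n c T = (\<lambda>i k. 1\<le>i \<and> i\<le>n \<and> k\<le>c \<and> \<not>(T(i-1) \<le> k \<and> k < T i), \<lambda>l k. 1\<le>l \<and> l\<le>c \<and> k\<le>n \<and> l \<noteq> T k)"

lemma stT_cong: "(\<And>k. k \<le> n \<Longrightarrow> T k = T' k) \<Longrightarrow> stT n c T = stT n c T'"
  unfolding stT_def by (auto intro!: ext)

lemma arith4: "a \<le> (b::nat) \<Longrightarrow> 1 \<le> l \<Longrightarrow>
      of_bool (\<not>(a \<le> l-1 \<and> l-1 < b)) + of_bool (a \<le> l \<and> l < b)
      + of_bool (l \<noteq> a) + of_bool (l = b) = (2::nat)"
  by (cases "l < a"; cases "l = a"; cases "l < b"; cases "l = b"; auto)

lemma sound:
  fixes T :: "nat \<Rightarrow> nat"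
  assumes mono: "\<And>k. T k \<le> T (Suc k)" and T0: "T 0 = 1" and j: "1 \<le> j" "j \<le> n"
    and Tj1: "T (j-1) \<le> c" and Tj: "\<And>k. j \<le> k \<Longrightarrow> T k = c+1"
  shows "stT n c T \<in> sv_states n c (\<lambda>l. l \<noteq> 1) (\<lambda>l. True) (\<lambda>i. True) (\<lambda>i. i \<noteq> j)"
proof -
  define H where "H = (\<lambda>i k. 1\<le>i \<and> i\<le>n \<and> k\<le>c \<and> \<not>(T(i-1) \<le> k \<and> k < T i))"
  define V where "V = (\<lambda>l k. 1\<le>l \<and> l\<le>c \<and> k\<le>n \<and> l \<noteq> T k)"
  have st: "stT n c T = (H,V)" unfolding stT_def H_def V_def by simp
  have monoT: "a \<le> b \<Longrightarrow> T a \<le> T b" for a b using mono by (rule lift_Suc_mono_le)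
  have T1: "1 \<le> T k" for k using monoT[of 0 k] T0 by simp
  have c1: "1 \<le> c" using T1[of "j-1"] Tj1 by simp
  have Tn: "T n = c+1" using Tj j by simp
  have Tlt: "T k \<le> c" if "k < j" for k
  proof -
    have "k \<le> j-1" using that by simp
    then show ?thesis using monoT[of k "j-1"] Tj1 by linarith
  qed
  have ic: "in_count H V i l = 2" if i: "1 \<le> i" "i \<le> n" and l: "1 \<le> l" "l \<le> c" for i l
  proof -
    have m: "T (i-1) \<le> T i" using mono[of "i-1"] i by simp
    have h1: "H i (l-1) = (\<not>(T(i-1) \<le> l-1 \<and> l-1 < T i))" using i l unfolding H_def by auto
    have h2: "H i l = (\<not>(T(i-1) \<le> l \<and> l < T i))" using i l unfolding H_def by simp
    have v1: "V l (i-1) = (l \<noteq> T (i-1))" using i l unfolding V_def by auto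
    have v2: "V l i = (l \<noteq> T i)" using i l unfolding V_def by simp
    show ?thesis unfolding in_count_def h1 h2 v1 v2 using arith4[OF m l(1)] by (simp add: of_bool_def)
  qed
  have hb: "H i 0 \<and> H i c = (i \<noteq> j)" if i: "1 \<le> i" "i \<le> n" for i
  proof -
    have "H i 0" using T1[of "i-1"] i c1 unfolding H_def by auto
    moreover have "H i c = (i \<noteq> j)"
    proof (cases "i < j")
      case True then show ?thesis using Tlt[of i] i unfolding H_def by auto
    next
      case False
      show ?thesis
      proof (cases "i = j")
        case True then show ?thesis using Tj1 Tj[of j] i unfolding H_def by auto
      next
        case False2: False
        then show ?thesis using Tj[of "i-1"] False i unfolding H_def by auto
      qed
    qed
    ultimately show ?thesis by blast
  qed
  have "(H,V) \<in> sv_states n c (\<lambda>l. l \<noteq> 1) (\<lambda>l. True) (\<lambda>i. True) (\<lambda>i. i \<noteq> j)"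
    unfolding sv_states_def mem_Collect_eq case_prod_conv
  proof (intro conjI)
    show "\<forall>i k. (i < 1 \<or> n < i \<or> c < k) \<longrightarrow> \<not> H i k" unfolding H_def by auto
    show "\<forall>l k. (l < 1 \<or> c < l \<or> n < k) \<longrightarrow> \<not> V l k" unfolding V_def by auto
    show "\<forall>l\<in>{1..c}. V l 0 = (l \<noteq> 1) \<and> V l n = True"
      unfolding V_def using T0 Tn j by auto
    show "\<forall>i\<in>{1..n}. H i 0 = True \<and> H i c = (i \<noteq> j)" using hb by auto
    show "\<forall>i\<in>{1..n}. \<forall>l\<in>{1..c}. in_count H V i l = 2" using ic by auto
  qed
  then show ?thesis using st by simp
qed


lemma least_char:
  fixes bb :: "nat \<Rightarrow> bool"
  assumes "\<forall>l. 1\<le>l \<longrightarrow> l\<le>c \<longrightarrow> (bb l \<longleftrightarrow> l = q)" "1 \<le> q" "q \<le> c+1"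
  shows "(LEAST l. (1\<le>l \<and> l\<le>c \<and> bb l) \<or> l = c+1) = q"
proof (rule Least_equality)
  show "(1\<le>q \<and> q\<le>c \<and> bb q) \<or> q = c+1" using assms by auto
  show "\<And>y. (1\<le>y \<and> y\<le>c \<and> bb y) \<or> y = c+1 \<Longrightarrow> q \<le> y" using assms by auto
qed

lemma ic_cons: "in_count h v i l = 2 \<Longrightarrow> of_bool (\<not> h i l) + of_bool (\<not> v l i) = of_bool (\<not> h i (l-1)) + (of_bool (\<not> v l (i-1)) :: nat)"
  unfolding in_count_def by (cases "h i l"; cases "v l i"; cases "h i (l-1)"; cases "v l (i-1)"; simp)

lemma complete:
  assumes hv: "(h,v) \<in> sv_states n c (\<lambda>l. l \<noteq> 1) (\<lambda>l. True) (\<lambda>i. True) (\<lambda>i. i \<noteq> j)"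
  and j: "1 \<le> j" "j \<le> n" and c1: "1 \<le> c"
  shows "\<exists>P. P 0 = 1 \<and> (\<forall>a b. a \<le> b \<longrightarrow> b \<le> n \<longrightarrow> P a \<le> P b) \<and> (\<forall>k\<le>n. 1 \<le> P k \<and> P k \<le> c+1)
     \<and> P (j-1) \<le> c \<and> (\<forall>k. j \<le> k \<and> k \<le> n \<longrightarrow> P k = c+1) \<and> (h,v) = stT n c P"
proof -
  have hout: "\<And>i k. (i < 1 \<or> i > n \<or> k > c) \<Longrightarrow> \<not> h i k"
   and vout: "\<And>l k. (l < 1 \<or> l > c \<or> k > n) \<Longrightarrow> \<not> v l k"
   and vtop: "\<And>l. 1 \<le> l \<Longrightarrow> l \<le> c \<Longrightarrow> v l 0 = (l \<noteq> 1) \<and> v l n"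
   and hside: "\<And>i. 1 \<le> i \<Longrightarrow> i \<le> n \<Longrightarrow> h i 0 \<and> h i c = (i \<noteq> j)"
   and ic: "\<And>i l. 1 \<le> i \<Longrightarrow> i \<le> n \<Longrightarrow> 1 \<le> l \<Longrightarrow> l \<le> c \<Longrightarrow> in_count h v i l = 2"
    using hv unfolding sv_states_def by auto
  define P where "P k = (LEAST l. (1\<le>l \<and> l\<le>c \<and> \<not> v l k) \<or> l = c+1)" for k
  have rowk: "\<exists>q. p \<le> q \<and> q \<le> c+1 \<and> (\<forall>l. 1 \<le> l \<longrightarrow> l \<le> c \<longrightarrow> (\<not> v l (Suc k) \<longleftrightarrow> l = q))
      \<and> (\<forall>l\<le>c. \<not> h (Suc k) l \<longleftrightarrow> p \<le> l \<and> l < q)"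
    if k: "k < n" and pk: "\<forall>l. 1\<le>l \<longrightarrow> l\<le>c \<longrightarrow> (\<not>v l k \<longleftrightarrow> l = p)" "1 \<le> p" "p \<le> c+1" for k p
  proof (rule row)
    show "\<not> \<not> h (Suc k) 0" using hside[of "Suc k"] k by simp
    show "of_bool (\<not> h (Suc k) l) + of_bool (\<not> v l (Suc k)) = of_bool (\<not> h (Suc k) (l-1)) + (of_bool (\<not> v l k) :: nat)"
      if "1 \<le> l" "l \<le> c" for l
      using ic_cons[OF ic[of "Suc k" l]] that k by simp
    show "\<not> v l k \<longleftrightarrow> l = p" if "1 \<le> l" "l \<le> c" for l using pk that by blast
  qed (use pk in auto)
  have A: "(\<forall>l. 1\<le>l \<longrightarrow> l\<le>c \<longrightarrow> (\<not>v l k \<longleftrightarrow> l = P k)) \<and> 1 \<le> P k \<and> P k \<le> c+1" if "k \<le> n" for k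
    using that
  proof (induction k)
    case 0
    have "\<forall>l. 1\<le>l \<longrightarrow> l\<le>c \<longrightarrow> (\<not>v l 0 \<longleftrightarrow> l = 1)" using vtop by auto
    moreover have "P 0 = 1" unfolding P_def by (rule least_char) (use vtop c1 in auto)
    ultimately show ?case using c1 by auto
  next
    case (Suc k)
    then have IH: "(\<forall>l. 1\<le>l \<longrightarrow> l\<le>c \<longrightarrow> (\<not>v l k \<longleftrightarrow> l = P k)) \<and> 1 \<le> P k \<and> P k \<le> c+1" by simp
    then obtain q where q: "P k \<le> q" "q \<le> c+1" "\<forall>l. 1 \<le> l \<longrightarrow> l \<le> c \<longrightarrow> (\<not> v l (Suc k) \<longleftrightarrow> l = q)"
      using rowk[of k "P k"] Suc.prems by auto
    have "P (Suc k) = q" unfolding P_def by (rule least_char) (use q IH in auto)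
    then show ?case using q IH by auto
  qed
  have R: "P k \<le> P (Suc k) \<and> (\<forall>l\<le>c. \<not> h (Suc k) l \<longleftrightarrow> P k \<le> l \<and> l < P (Suc k))" if k: "k < n" for k
  proof -
    obtain q where q: "P k \<le> q" "q \<le> c+1" "\<forall>l. 1 \<le> l \<longrightarrow> l \<le> c \<longrightarrow> (\<not> v l (Suc k) \<longleftrightarrow> l = q)"
       "\<forall>l\<le>c. \<not> h (Suc k) l \<longleftrightarrow> P k \<le> l \<and> l < q"
      using rowk[of k "P k"] A[of k] k by auto
    have "P (Suc k) = q" unfolding P_def by (rule least_char) (use q A[of k] k in auto)
    then show ?thesis using q by auto
  qed
  have monoP: "P a \<le> P b" if "a \<le> b" "b \<le> n" for a b
    using that
  proof (induction b)
    case 0 then show ?case by simp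
  next
    case (Suc b)
    show ?case
    proof (cases "a = Suc b")
      case True then show ?thesis by simp
    next
      case False then show ?thesis using Suc R[of b] by auto
    qed
  qed
  have P0: "P 0 = 1" using A[of 0] vtop c1 by force
  have Pn: "P n = c+1"
  proof -
    have "\<forall>l. 1\<le>l \<longrightarrow> l\<le>c \<longrightarrow> (\<not>v l n \<longleftrightarrow> l = c+1)" using vtop by auto
    then show ?thesis unfolding P_def by (intro least_char) auto
  qed
  have Rj: "P (j-1) \<le> c \<and> P j = c+1"
  proof -
    have "\<not> h j c" using hside[of j] j by simp
    then show ?thesis using R[of "j-1"] j A[of j] by auto
  qed
  have Pge: "P k = c+1" if "j \<le> k" "k \<le> n" for k
    using monoP[of j k] that Rj A[of k] by auto
  have eq: "(h,v) = stT n c P"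
    unfolding stT_def
  proof (simp, intro conjI ext)
    fix i k
    show "h i k = (Suc 0 \<le> i \<and> i \<le> n \<and> k \<le> c \<and> (P (i - Suc 0) \<le> k \<longrightarrow> \<not> k < P i))"
    proof (cases "1 \<le> i \<and> i \<le> n \<and> k \<le> c")
      case True
      then have "i - 1 < n" "Suc (i-1) = i" by auto
      then have r: "\<forall>l\<le>c. \<not> h i l \<longleftrightarrow> P (i-1) \<le> l \<and> l < P i" using R[of "i-1"] by metis
      show ?thesis using r True by auto
    next
      case False then show ?thesis using hout by auto
    qed
  next
    fix l k
    show "v l k = (Suc 0 \<le> l \<and> l \<le> c \<and> k \<le> n \<and> l \<noteq> P k)"
    proof (cases "1 \<le> l \<and> l \<le> c \<and> k \<le> n")
      case True
      then show ?thesis using A[of k] by auto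
    next
      case False then show ?thesis using vout by auto
    qed
  qed
  show ?thesis
    apply (rule exI[of _ P])
    using P0 monoP A Rj Pge eq by auto
qed


definition Tf :: "nat \<Rightarrow> nat \<Rightarrow> nat list \<Rightarrow> nat \<Rightarrow> nat" where
 "Tf c j xs k = (if k = 0 then 1 else if k < j then xs!(k-1) else c+1)"

lemma main_count:
  assumes j: "1 \<le> j" "j \<le> n" and c1: "1 \<le> c"
  shows "card (sv_states n c (\<lambda>l. l \<noteq> 1) (\<lambda>l. True) (\<lambda>i. True) (\<lambda>i. i \<noteq> j)) = (c + (j-1) - 1) choose (j-1)"
proof -
  define Xs where "Xs = {xs :: nat list. sorted xs \<and> length xs = j-1 \<and> set xs \<subseteq> {1..c}}"
  define S where "S = sv_states n c (\<lambda>l. l \<noteq> 1) (\<lambda>l. True) (\<lambda>i. True) (\<lambda>i. i \<noteq> j)"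
  have bij1: "bij_betw (\<lambda>xs. stT n c (Tf c j xs)) Xs S"
    unfolding bij_betw_def
  proof (intro conjI)
    show "inj_on (\<lambda>xs. stT n c (Tf c j xs)) Xs"
    proof (rule inj_onI)
      fix xs ys assume xs: "xs \<in> Xs" and ys: "ys \<in> Xs" and eq: "stT n c (Tf c j xs) = stT n c (Tf c j ys)"
      have "xs ! i = ys ! i" if i: "i < j-1" for i
      proof -
        have vx: "snd (stT n c (Tf c j xs)) l (Suc i) = snd (stT n c (Tf c j ys)) l (Suc i)" for l
          using eq by simp
        have "ys ! i \<in> set ys" using ys i unfolding Xs_def by auto
        then have yin: "ys!i \<in> {1..c}" using ys unfolding Xs_def by auto
        have t: "Tf c j xs (Suc i) = xs!i" "Tf c j ys (Suc i) = ys ! i" using i unfolding Tf_def by auto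
        show ?thesis using vx[of "ys!i"] yin i j unfolding stT_def by (auto simp: t)
      qed
      then show "xs = ys" using xs ys unfolding Xs_def by (auto intro: nth_equalityI)
    qed
    show "(\<lambda>xs. stT n c (Tf c j xs)) ` Xs = S"
    proof
      show "(\<lambda>xs. stT n c (Tf c j xs)) ` Xs \<subseteq> S"
      proof
        fix st assume "st \<in> (\<lambda>xs. stT n c (Tf c j xs)) ` Xs"
        then obtain xs where xs: "xs \<in> Xs" and st: "st = stT n c (Tf c j xs)" by auto
        have srt: "sorted xs" and len: "length xs = j-1" and set: "set xs \<subseteq> {1..c}" using xs unfolding Xs_def by auto
        have nin: "1 \<le> xs!i \<and> xs!i \<le> c" if "i < j-1" for i
        proof -
          have "xs!i \<in> set xs" using that len by auto
          then show ?thesis using set by auto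
        qed
        have mono: "Tf c j xs k \<le> Tf c j xs (Suc k)" for k
        proof -
          consider "k = 0" | "0 < k" "Suc k < j" | "0 < k" "k < j" "Suc k = j" | "j \<le> k" by linarith
          then show ?thesis
          proof cases
            case 1 then show ?thesis using nin[of 0] unfolding Tf_def by auto
          next
            case 2
            have "xs!(k-1) \<le> xs!k" using srt len 2 unfolding sorted_iff_nth_mono by auto
            then show ?thesis using 2 unfolding Tf_def by auto
          next
            case 3 then show ?thesis using nin[of "k-1"] unfolding Tf_def by auto
          next
            case 4 then show ?thesis unfolding Tf_def by auto
          qed
        qed
        have Tj1: "Tf c j xs (j-1) \<le> c"
        proof (cases "j = 1")
          case True then show ?thesis using c1 unfolding Tf_def by auto
        next
          case False then have "j - 2 < j - 1" "j - 1 - 1 = j - 2" "j - 1 \<noteq> 0" using j by auto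
          then show ?thesis using nin[of "j-2"] unfolding Tf_def by auto
        qed
        show "st \<in> S" unfolding S_def st
          by (rule sound[OF mono _ j Tj1]) (use j in \<open>auto simp: Tf_def\<close>)
      qed
      show "S \<subseteq> (\<lambda>xs. stT n c (Tf c j xs)) ` Xs"
      proof
        fix st assume st: "st \<in> S"
        obtain h v where hv: "st = (h,v)" by force
        obtain P where P: "P 0 = 1" "\<forall>a b. a \<le> b \<longrightarrow> b \<le> n \<longrightarrow> P a \<le> P b" "\<forall>k\<le>n. 1 \<le> P k \<and> P k \<le> c+1"
          "P (j-1) \<le> c" "\<forall>k. j \<le> k \<and> k \<le> n \<longrightarrow> P k = c+1" "(h,v) = stT n c P"
          using complete[of h v n c j] st j c1 unfolding S_def hv by blast
        define xs where "xs = map P [1..<j]"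
        have len: "length xs = j-1" unfolding xs_def by simp
        have xsi: "xs ! i = P (Suc i)" if "i < j-1" for i using that unfolding xs_def by simp
        have "xs \<in> Xs" unfolding Xs_def
        proof (intro CollectI conjI)
          show "sorted xs" unfolding sorted_iff_nth_mono len
            using xsi P(2) j by auto
          show "length xs = j-1" by (rule len)
          show "set xs \<subseteq> {1..c}"
          proof
            fix x assume "x \<in> set xs"
            then obtain i where i: "i < j-1" "x = xs!i" using len by (auto simp: in_set_conv_nth)
            have "P (Suc i) \<le> P (j-1)" using P(2) i j by auto
            then show "x \<in> {1..c}" using i xsi[of i] P(3) P(4) j by auto
          qed
        qed
        moreover have "stT n c P = stT n c (Tf c j xs)"
        proof (rule stT_cong)
          fix k assume k: "k \<le> n"
          show "P k = Tf c j xs k"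
          proof (cases "k = 0")
            case True then show ?thesis using P(1) unfolding Tf_def by simp
          next
            case False
            show ?thesis
            proof (cases "k < j")
              case True then show ?thesis using False xsi[of "k-1"] unfolding Tf_def by auto
            next
              case False2: False then show ?thesis using False P(5) k unfolding Tf_def by auto
            qed
          qed
        qed
        ultimately show "st \<in> (\<lambda>xs. stT n c (Tf c j xs)) ` Xs" using hv P(6) by auto
      qed
    qed
  qed
  have bij2: "bij_betw mset Xs (multisets_of_size {1..c} (j-1))"
    unfolding bij_betw_def
  proof (intro conjI)
    show "inj_on mset Xs"
    proof (rule inj_onI)
      fix xs ys assume "xs \<in> Xs" "ys \<in> Xs" "mset xs = mset ys"
      then show "xs = ys" unfolding Xs_def
        by (metis (mono_tags, lifting) mem_Collect_eq sorted_list_of_multiset_mset sorted_sort_id)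
    qed
    show "mset ` Xs = multisets_of_size {1..c} (j-1)"
    proof
      show "mset ` Xs \<subseteq> multisets_of_size {1..c} (j-1)"
        unfolding Xs_def multisets_of_size_def by auto
      show "multisets_of_size {1..c} (j-1) \<subseteq> mset ` Xs"
      proof
        fix M assume M: "M \<in> multisets_of_size {1..c} (j-1)"
        have "sorted_list_of_multiset M \<in> Xs" using M unfolding Xs_def multisets_of_size_def
          by (auto simp flip: size_mset)
        then show "M \<in> mset ` Xs" by (metis image_eqI mset_sorted_list_of_multiset)
      qed
    qed
  qed
  have "card S = card Xs" using bij1 by (simp add: bij_betw_same_card)
  also have "\<dots> = card (multisets_of_size {1..c} (j-1))" using bij2 by (simp add: bij_betw_same_card)
  also have "\<dots> = (c + (j-1) - 1) choose (j-1)" by (simp add: card_multisets_of_size)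
  finally show ?thesis unfolding S_def .
qed

theorem lemma2:
  fixes n m j :: nat
  assumes "n \<ge> 1" and "1 \<le> j" and "j \<le> n"
  shows "L n m j = (m + j - 1) choose m"
proof -
  have "L n m j = (m + 1 + (j-1) - 1) choose (j-1)"
    unfolding L_def using main_count[of j n "m+1"] assms by simp
  also have "\<dots> = (m + j - 1) choose (j-1)" using assms by simp
  also have "\<dots> = (m + j - 1) choose m"
    using binomial_symmetric[of m "m+j-1"] assms by simp
  finally show ?thesis .
qed

end
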